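(* Let $X$ be a complex abelian variety of dimension $g$, and let $\alpha\in\mathrm{Br}(X)$ be a topologically trivial Brauer class with $\mathrm{per}(\alpha)=p^r$ for a prime $p$ and an integer $r>0$. Let $b\in\mathrm{H}^2(X^{an},\mathbb{Z})$ be an integral class whose image in $\mathrm{H}^2(X^{an},\mathbb{Z}/p^r\mathbb{Z})\cong\mathrm{H}^2_{\acute{e}t}(X,\mu_{p^r})$ maps to $\alpha$, and set $B=b/p^r$. Put \[N=rs := rg-\left\lfloor\frac{g-1}{p-1}\right\rfloor+\lfloor\log_p(g-1)\rfloor+1\] and $d=p^{N}$. Then the de Jong--Perry obstruction vanishes in degree $d$: there exist rational Hodge classes $c_j\in\mathrm{H}^{2j}(X^{an},\mathbb{Q})$, $1\leq j\leq m=\min\{d,g\}$ (one may take all $c_j=0$), such that the classes \[p_i^{B,d}(1,c_1,\dots,c_i)=\binom{d}{i}B^i+\sum_{j=1}^i\binom{d-j}{i-j}B^{i-j}c_j\] are integral for all $1\leq i\leq m$. When $p^r=2$, one has $rs=\lfloor\log_p(g-1)\rfloor+2$.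
   Context: For an abelian variety $\mathrm{H}^*(X^{an},\mathbb{Z})$ is torsion-free, so every Brauer class is topologically trivial (in the kernel of $\mathrm{Br}(X)\to\mathrm{H}^3(X^{an},\mathbb{Z})_{tors}$). A class in $\mathrm{H}^{2i}(X^{an},\mathbb{Q})$ is integral if it lies in the image of $\mathrm{H}^{2i}(X^{an},\mathbb{Z})$. The de Jong--Perry obstruction to $\mathrm{ind}(\alpha)\mid d$ is the non-existence of rational Hodge classes $c_j$ making all $p_i^{B,d}(1,c_1,\dots,c_i)$, $1\le i\le\min\{d,\dim X\}$, integral; "the algorithm fails in degree $2d$" means this obstruction vanishes for $d$. *)

theory Defs
  imports Complex_Main "HOL-Combinatorics.Permutations" "HOL-Computational_Algebra.Primes"
begin

text \<open>Model: X^an = V / Lambda with Lambda = Z^n (n = 2g, standard basis e_0..e_(n-1)),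
 V = R^n, complex structure J (an n x n real matrix with J*J = -1).
 H^k(X^an, Q) = alternating k-forms on Lambda_Q, represented by their values on
 e_S (S a k-subset of {..<n}, listed increasingly).\<close>

type_synonym form = "nat set \<Rightarrow> real"

definition is_form :: "nat \<Rightarrow> nat \<Rightarrow> form \<Rightarrow> bool" where
  "is_form n k \<omega> \<longleftrightarrow> (\<forall>S. \<omega> S \<noteq> 0 \<longrightarrow> finite S \<and> S \<subseteq> {..<n} \<and> card S = k)"

definition integral_form :: "form \<Rightarrow> bool" where
  "integral_form \<omega> \<longleftrightarrow> (\<forall>S. \<omega> S \<in> \<int>)"

definition rational_form :: "form \<Rightarrow> bool" where
  "rational_form \<omega> \<longleftrightarrow> (\<forall>S. \<omega> S \<in> \<rat>)"

text \<open>Cup (wedge) product: e_A \<and> e_B = (-1)^(inversions) e_(A \<union> B).\<close>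
definition shsign :: "nat set \<Rightarrow> nat set \<Rightarrow> real" where
  "shsign A B = (-1) ^ card {(a, b). a \<in> A \<and> b \<in> B \<and> b < a}"

definition wedge :: "form \<Rightarrow> form \<Rightarrow> form" where
  "wedge \<omega> \<eta> S = (\<Sum>A\<in>Pow S. shsign A (S - A) * \<omega> A * \<eta> (S - A))"

definition one_form :: form where
  "one_form S = (if S = {} then 1 else 0)"

primrec wpow :: "form \<Rightarrow> nat \<Rightarrow> form" where
  "wpow \<omega> 0 = one_form"
| "wpow \<omega> (Suc i) = wedge \<omega> (wpow \<omega> i)"

definition ldet :: "nat \<Rightarrow> (nat \<Rightarrow> nat \<Rightarrow> real) \<Rightarrow> real" where
  "ldet k A = (\<Sum>\<sigma> | \<sigma> permutes {..<k}. of_int (sign \<sigma>) * (\<Prod>i<k. A i (\<sigma> i)))"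

definition form_eval :: "nat \<Rightarrow> nat \<Rightarrow> form \<Rightarrow> (nat \<Rightarrow> nat \<Rightarrow> real) \<Rightarrow> real" where
  "form_eval n k \<omega> v = (\<Sum>S | S \<subseteq> {..<n} \<and> card S = k.
      \<omega> S * ldet k (\<lambda>a c. v c (sorted_list_of_set S ! a)))"

definition mv :: "nat \<Rightarrow> (nat \<Rightarrow> nat \<Rightarrow> real) \<Rightarrow> (nat \<Rightarrow> real) \<Rightarrow> (nat \<Rightarrow> real)" where
  "mv n M x = (\<lambda>a. \<Sum>b<n. M a b * x b)"

definition rotJ :: "nat \<Rightarrow> (nat \<Rightarrow> nat \<Rightarrow> real) \<Rightarrow> real \<Rightarrow> (nat \<Rightarrow> real) \<Rightarrow> (nat \<Rightarrow> real)" where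
  "rotJ n J \<theta> x = (\<lambda>a. cos \<theta> * x a + sin \<theta> * mv n J x a)"

text \<open>Rational Hodge class of degree k: a rational k-form of type (k/2,k/2), i.e. invariant
 under pullback by exp(\<theta>J) = cos \<theta> + sin \<theta> J for all \<theta> (this acts by e^(i(p-q)\<theta>) on H^(p,q)).\<close>
definition hodge_class :: "nat \<Rightarrow> (nat \<Rightarrow> nat \<Rightarrow> real) \<Rightarrow> nat \<Rightarrow> form \<Rightarrow> bool" where
  "hodge_class n J k \<omega> \<longleftrightarrow> is_form n k \<omega> \<and> rational_form \<omega> \<and>
     (\<forall>\<theta> v. form_eval n k \<omega> (\<lambda>c. rotJ n J \<theta> (v c)) = form_eval n k \<omega> v)"

definition complex_structure :: "nat \<Rightarrow> (nat \<Rightarrow> nat \<Rightarrow> real) \<Rightarrow> bool" where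
  "complex_structure n J \<longleftrightarrow> (\<forall>a b. (n \<le> a \<or> n \<le> b) \<longrightarrow> J a b = 0) \<and>
     (\<forall>a<n. \<forall>c<n. (\<Sum>b<n. J a b * J b c) = (if a = c then -1 else 0))"

definition bil :: "nat \<Rightarrow> (nat \<Rightarrow> nat \<Rightarrow> int) \<Rightarrow> (nat \<Rightarrow> real) \<Rightarrow> (nat \<Rightarrow> real) \<Rightarrow> real" where
  "bil n E x y = (\<Sum>a<n. \<Sum>b<n. of_int (E a b) * x a * y b)"

text \<open>Riemann condition: the complex torus R^n/Z^n with complex structure J is an abelian
 variety iff it carries a polarization (positive definite Riemann form).\<close>
definition polarizable :: "nat \<Rightarrow> (nat \<Rightarrow> nat \<Rightarrow> real) \<Rightarrow> bool" where
  "polarizable n J \<longleftrightarrow> (\<exists>E :: nat \<Rightarrow> nat \<Rightarrow> int.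
     (\<forall>a b. E a b = - E b a) \<and>
     (\<forall>x y. bil n E (mv n J x) (mv n J y) = bil n E x y) \<and>
     (\<forall>x. (\<exists>a<n. x a \<noteq> 0) \<longrightarrow> bil n E x (mv n J x) > 0))"

definition pBd :: "nat \<Rightarrow> form \<Rightarrow> (nat \<Rightarrow> form) \<Rightarrow> nat \<Rightarrow> form" where
  "pBd d B c i = (\<lambda>S. real (d choose i) * wpow B i S +
      (\<Sum>j=1..i. real ((d - j) choose (i - j)) * wedge (wpow B (i - j)) (c j) S))"

definition expN :: "nat \<Rightarrow> nat \<Rightarrow> nat \<Rightarrow> int" where
  "expN p r g = int r * int g - (int g - 1) div (int p - 1)
                + \<lfloor>log (real p) (real g - 1)\<rfloor> + 1"

end

theory Submission
  imports Defs "HOL-Combinatorics.Multiset_Permutations"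
begin


function pe :: "nat \<Rightarrow> nat \<Rightarrow> nat" where
  "pe p m = (if p \<le> 1 \<or> m = 0 then 0 else m div p + pe p (m div p))"
  by auto
termination by (relation "measure snd") auto

function nd :: "nat \<Rightarrow> nat \<Rightarrow> nat" where
  "nd p m = (if p \<le> 1 \<or> m = 0 then 0 else 1 + nd p (m div p))"
  by auto
termination by (relation "measure snd") auto

declare pe.simps[simp del] nd.simps[simp del]

lemma fact_mult_dvd:
  assumes "p \<ge> 2" shows "p ^ q * fact q dvd (fact (p * q) :: nat)"
proof (induction q)
  case 0 then show ?case by simp
next
  case (Suc q)
  have "fact (p*q+p) = (p*q+p) * (fact (p*q+p-1) :: nat)"
    using fact_reduce[of "p*q+p", where 'a=nat] assms by simp
  then have "fact (p * Suc q) = (p*q+p) * (fact (p*q+p-1) :: nat)"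
    by (simp add: algebra_simps)
  moreover have "fact (p*q) dvd (fact (p*q+p-1) :: nat)" by (rule fact_dvd) (use assms in simp)
  ultimately have "fact (p*q) * (p*q+p) dvd (fact (p * Suc q) :: nat)" by simp
  moreover have "p ^ Suc q * fact (Suc q) = (p^q * fact q) * (p*q+p)"
    by (simp add: algebra_simps)
  moreover have "(p^q * fact q) * (p*q+p) dvd fact (p*q) * (p*q+p)"
    using Suc by (rule mult_dvd_mono) simp
  ultimately show ?case using dvd_trans by metis
qed

lemma pe_dvd:
  assumes "p \<ge> 2" shows "p ^ pe p m dvd (fact m :: nat)"
proof (induction m rule: less_induct)
  case (less m)
  show ?case
  proof (cases "m = 0")
    case True then show ?thesis by (simp add: pe.simps)
  next
    case False
    define q where "q = m div p"
    have q: "q < m" using False assms q_def by simp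
    have e: "pe p m = q + pe p q" using False assms q_def by (subst pe.simps) simp
    have "p ^ pe p m = p^q * p ^ pe p q" using e by (simp add: power_add)
    also have "\<dots> dvd p^q * fact q" using less q by simp
    also have "\<dots> dvd fact (p*q)" using fact_mult_dvd assms by blast
    also have "\<dots> dvd fact m" by (rule fact_dvd) (simp add: q_def)
    finally show ?thesis .
  qed
qed

lemma pe_nd_bound:
  assumes "p \<ge> 2" shows "m \<le> (p-1) * (pe p m + nd p m)"
proof (induction m rule: less_induct)
  case (less m)
  show ?case
  proof (cases "m = 0")
    case True then show ?thesis by simp
  next
    case False
    define q where "q = m div p"
    have q: "q < m" using False assms q_def by simp
    have e: "pe p m = q + pe p q" using False assms q_def by (subst pe.simps) simp
    have n: "nd p m = 1 + nd p q" using False assms q_def by (subst nd.simps) simp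
    have IH: "q \<le> (p-1) * (pe p q + nd p q)" using less q by simp
    have md: "m = p*q + m mod p" using q_def by simp
    have mm: "m mod p \<le> p - 1" proof -
      have "m mod p < p" using assms by simp
      then show ?thesis by linarith
    qed
    have "(p-1) * (pe p m + nd p m) = (p-1)*q + (p-1) * (pe p q + nd p q) + (p-1)"
      using e n by (simp add: algebra_simps)
    also have "\<dots> \<ge> (p-1)*q + q + m mod p" using IH mm by linarith
    moreover have "(p-1)*q + q = p*q" using assms by (cases p) auto
    ultimately show ?thesis using md by linarith
  qed
qed

lemma nd_pow:
  assumes "p \<ge> 2" "m \<ge> 1" shows "p ^ (nd p m - 1) \<le> m"
  using assms(2)
proof (induction m rule: less_induct)
  case (less m)
  define q where "q = m div p"
  have q: "q < m" using less assms q_def by simp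
  have n: "nd p m = 1 + nd p q" using less assms q_def by (subst nd.simps) simp
  show ?case
  proof (cases "q = 0")
    case True then show ?thesis using n less by (simp add: nd.simps)
  next
    case False
    have IH: "p ^ (nd p q - 1) \<le> q" using less q False by simp
    have "nd p q \<ge> 1" using False assms by (subst nd.simps) simp
    then have "p ^ (nd p m - 1) = p * p ^ (nd p q - 1)" using n
      by (cases "nd p q") auto
    also have "\<dots> \<le> p * q" using IH by simp
    also have "\<dots> \<le> m" using q_def by simp
    finally show ?thesis .
  qed
qed

lemma nd_log:
  assumes "p \<ge> 2" "1 \<le> m" "m \<le> g - 1"
  shows "int (nd p m) \<le> \<lfloor>log (real p) (real g - 1)\<rfloor> + 1"
proof -
  have "p ^ (nd p m - 1) \<le> g - 1" using nd_pow[OF assms(1,2)] assms(3) by linarith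
  then have "real p ^ (nd p m - 1) \<le> real g - 1" using assms
  proof -
    have "real (p ^ (nd p m - 1)) \<le> real (g - 1)" using \<open>p ^ (nd p m - 1) \<le> g - 1\<close> by (simp only: of_nat_le_iff)
    then show ?thesis using assms by (simp add: of_nat_diff)
  qed
  then have "real (nd p m - 1) \<le> log (real p) (real g - 1)"
    using assms(1) by (intro le_log_of_power) auto
  then have "int (nd p m - 1) \<le> \<lfloor>log (real p) (real g - 1)\<rfloor>"
    by (simp add: le_floor_iff)
  then show ?thesis by linarith
qed

lemma key_ineq:
  assumes "prime p" "r > 0" "g \<ge> 2" "1 \<le> i" "i \<le> g"
  shows "expN p r g \<ge> 1" "int (r * i) \<le> expN p r g + int (pe p (i - 1))"
proof -
  have p2: "p \<ge> 2" using assms(1) prime_ge_2_nat by blast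
  define D where "D = (int g - 1) div (int p - 1)"
  define L where "L = \<lfloor>log (real p) (real g - 1)\<rfloor>"
  have lg: "log (real p) (real g - 1) \<ge> 0"
  proof -
    have "real g - 1 \<ge> 1" using assms(3) by simp
    moreover have "real p > 1" using p2 by simp
    ultimately show ?thesis by (simp add: zero_le_log_cancel_iff)
  qed
  have L0: "L \<ge> 0" unfolding L_def using lg by simp
  have p1: "int p - 1 \<ge> 1" using p2 by simp
  have pD: "(int p - 1) * D \<le> int g - 1"
  proof -
    have "(int p - 1) * D + (int g - 1) mod (int p - 1) = int g - 1"
      unfolding D_def by (rule mult_div_mod_eq)
    moreover have "(int g - 1) mod (int p - 1) \<ge> 0" using p1 by simp
    ultimately show ?thesis by linarith
  qed
  have D0: "D \<le> int g - 1"
  proof -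
    have "1 * D \<le> (int p - 1) * D \<or> D < 0"
    proof (cases "D < 0")
      case False
      then show ?thesis using mult_right_mono[OF p1, of D] by simp
    qed simp
    then show ?thesis using pD by linarith
  qed
  have rg: "int r * int g \<ge> int g" using mult_right_mono[of 1 "int r" "int g"] assms(2) by simp
  have ex: "expN p r g = int r * int g - D + L + 1" unfolding expN_def D_def L_def by simp
  show "expN p r g \<ge> 1" using ex rg D0 L0 by linarith
  define m where "m = i - 1"
  define e where "e = pe p m"
  have mb: "int m \<le> (int p - 1) * (int e + L + 1)"
  proof (cases "m = 0")
    case True
    have "0 \<le> (int p - 1) * (int e + L + 1)" using L0 p1 by simp
    then show ?thesis using True by simp
  next
    case False
    have a: "int (nd p m) \<le> L + 1" unfolding L_def using nd_log[OF p2, of m g] False assms(4,5) m_def by simp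
    have b0: "m \<le> (p-1) * (pe p m + nd p m)" by (rule pe_nd_bound[OF p2])
    have b: "int m \<le> (int p - 1) * (int e + int (nd p m))"
    proof -
      have "int m \<le> int ((p-1) * (pe p m + nd p m))" using b0 by linarith
      also have "\<dots> = (int p - 1) * (int e + int (nd p m))" using p2 unfolding e_def by (simp add: of_nat_diff)
      finally show ?thesis .
    qed
    have "(int p - 1) * (int e + int (nd p m)) \<le> (int p - 1) * (int e + L + 1)"
      using a p1 by (intro mult_left_mono) auto
    then show ?thesis using b by linarith
  qed
  have gi: "int g - int i \<ge> 0" using assms(5) by simp
  have c1: "int g - int i \<le> (int p - 1) * (int g - int i)"
    using mult_right_mono[OF p1 gi] by simp
  have "(int p - 1) * D \<le> (int p - 1) * (int e + L + 1 + (int g - int i))"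
    using pD mb c1 m_def assms(4) by (simp add: distrib_left)
  then have dd: "D \<le> int e + L + 1 + (int g - int i)" using p1
    by (simp add: mult_le_cancel_left)
  have c2: "int g - int i \<le> int r * (int g - int i)"
    using mult_right_mono[OF _ gi, of 1 "int r"] assms(2) by simp
  have "int r * int i = int r * int g - int r * (int g - int i)" by (simp add: algebra_simps)
  then show "int (r * i) \<le> expN p r g + int (pe p (i - 1))"
    using ex dd c2 unfolding e_def m_def by simp
qed


fun good :: "nat set list \<Rightarrow> bool" where
  "good [] = True"
| "good (A # xs) = (card A = 2 \<and> A \<inter> \<Union>(set xs) = {} \<and> good xs)"

fun sg :: "nat set list \<Rightarrow> real" where
  "sg [] = 1"
| "sg (A # xs) = shsign A (\<Union>(set xs)) * sg xs"

definition LL :: "nat \<Rightarrow> nat set \<Rightarrow> nat set list set" where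
  "LL i S = {xs. length xs = i \<and> good xs \<and> \<Union>(set xs) = S}"

lemma good_alt:
  "good xs \<longleftrightarrow> distinct xs \<and> (\<forall>A\<in>set xs. card A = 2) \<and> pairwise (\<lambda>A B. A \<inter> B = {}) (set xs)"
proof (induction xs)
  case Nil then show ?case by simp
next
  case (Cons A xs)
  show ?case
  proof
    assume g: "good (A # xs)"
    then have c: "card A = 2" "A \<inter> \<Union>(set xs) = {}" "good xs" by auto
    have "A \<noteq> {}" using c(1) by auto
    then have "A \<notin> set xs" using c(2) by auto
    then show "distinct (A # xs) \<and> (\<forall>B\<in>set (A # xs). card B = 2) \<and> pairwise (\<lambda>A B. A \<inter> B = {}) (set (A # xs))"
      using c Cons.IH by (auto simp: pairwise_insert)
  next
    assume h: "distinct (A # xs) \<and> (\<forall>B\<in>set (A # xs). card B = 2) \<and> pairwise (\<lambda>A B. A \<inter> B = {}) (set (A # xs))"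
    then have "good xs" using Cons.IH by (auto simp: pairwise_insert)
    moreover have "A \<inter> \<Union>(set xs) = {}" using h by (auto simp: pairwise_insert)
    ultimately show "good (A # xs)" using h by simp
  qed
qed

lemma card2_finite: "card A = 2 \<Longrightarrow> finite A"
  by (metis card.infinite zero_neq_numeral)

lemma shsign_union:
  assumes "finite A" "finite X" "finite Y" "X \<inter> Y = {}"
  shows "shsign A (X \<union> Y) = shsign A X * shsign A Y"
proof -
  let ?F = "\<lambda>Z. {(a, b). a \<in> A \<and> b \<in> Z \<and> b < a}"
  have e: "?F (X \<union> Y) = ?F X \<union> ?F Y" by auto
  have d: "?F X \<inter> ?F Y = {}" using assms(4) by auto
  have f: "finite (?F Z)" if "finite Z" for Z
    by (rule finite_subset[of _ "A \<times> Z"]) (use that assms(1) in auto)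
  have "card (?F (X \<union> Y)) = card (?F X) + card (?F Y)"
    unfolding e by (rule card_Un_disjoint) (use f assms d in auto)
  then show ?thesis unfolding shsign_def by (simp add: power_add)
qed

lemma neg1_pow_eq:
  assumes "even (m + n :: nat)" shows "(-1::real) ^ m = (-1) ^ n"
  using assms by (cases "even m") (auto simp: neg_one_even_power neg_one_odd_power)

lemma shsign_comm:
  assumes "finite A" "finite B" "A \<inter> B = {}" "even (card A * card B)"
  shows "shsign A B = shsign B A"
proof -
  let ?F = "{(a, b). a \<in> A \<and> b \<in> B \<and> b < a}"
  let ?G = "{(b, a). b \<in> B \<and> a \<in> A \<and> a < b}"
  let ?H = "{(a, b). a \<in> A \<and> b \<in> B \<and> a < b}"
  have GH: "?G = prod.swap ` ?H" by auto
  have cG: "card ?G = card ?H" unfolding GH by (rule card_image) simp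
  have un: "?F \<union> ?H = A \<times> B"
  proof (rule set_eqI)
    fix x :: "nat \<times> nat"
    obtain a b where x: "x = (a, b)" by force
    show "x \<in> ?F \<union> ?H \<longleftrightarrow> x \<in> A \<times> B"
      unfolding x using assms(3) by (cases "a < b"; cases "b < a") auto
  qed
  have fin: "finite (A \<times> B)" using assms by simp
  have "card ?F + card ?H = card (A \<times> B)"
  proof -
    have f1: "finite ?F" by (rule finite_subset[OF _ fin]) auto
    have f2: "finite ?H" by (rule finite_subset[OF _ fin]) auto
    have "?F \<inter> ?H = {}" by auto
    then show ?thesis unfolding un[symmetric] using f1 f2 by (simp add: card_Un_disjoint)
  qed
  then have "card ?F + card ?G = card A * card B" using cG by (simp add: card_cartesian_product)
  then show ?thesis unfolding shsign_def using assms(4) by (intro neg1_pow_eq) simp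
qed

lemma good_fin_union: "good xs \<Longrightarrow> finite (\<Union>(set xs))"
  by (induction xs) (auto simp: card2_finite)

lemma sg_Ints: "sg xs \<in> \<int>"
  by (induction xs) (auto simp: shsign_def)

lemma move_front:
  "good (ys1 @ A # ys2) \<Longrightarrow> sg (ys1 @ A # ys2) = sg (A # ys1 @ ys2)"
proof (induction ys1)
  case Nil then show ?case by simp
next
  case (Cons B ys1)
  let ?R = "\<Union>(set (ys1 @ ys2))"
  have gB: "card B = 2" "B \<inter> \<Union>(set (ys1 @ A # ys2)) = {}" "good (ys1 @ A # ys2)"
    using Cons.prems by auto
  have IH: "sg (ys1 @ A # ys2) = shsign A ?R * sg (ys1 @ ys2)"
    using Cons.IH gB(3) by simp
  have gA: "good (A # ys1 @ ys2)"
    using gB(3) unfolding good_alt by auto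
  then have cA: "card A = 2" "A \<inter> ?R = {}" "good (ys1 @ ys2)" by auto
  have fA: "finite A" and fB: "finite B" using cA gB card2_finite by auto
  have fR: "finite ?R" using good_fin_union[OF cA(3)] .
  have U: "\<Union>(set (ys1 @ A # ys2)) = A \<union> ?R" by auto
  have BA: "B \<inter> A = {}" and BR: "B \<inter> ?R = {}" using gB(2) U by auto
  have U2: "\<Union>(set (B # ys1 @ ys2)) = B \<union> ?R" by auto
  have "sg ((B # ys1) @ A # ys2) = shsign B (A \<union> ?R) * (shsign A ?R * sg (ys1 @ ys2))"
    using IH U by simp
  also have "\<dots> = shsign B A * shsign B ?R * shsign A ?R * sg (ys1 @ ys2)"
    using shsign_union[OF fB fA fR cA(2)] by simp
  also have "\<dots> = shsign A B * shsign A ?R * shsign B ?R * sg (ys1 @ ys2)"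
    using shsign_comm[OF fB fA BA] gB(1) cA(1) by simp
  also have "\<dots> = shsign A (B \<union> ?R) * (shsign B ?R * sg (ys1 @ ys2))"
    using shsign_union[OF fA fB fR BR] by simp
  also have "\<dots> = sg (A # (B # ys1) @ ys2)" using U2 by simp
  finally show ?case .
qed

lemma sg_perm:
  "good xs \<Longrightarrow> distinct ys \<Longrightarrow> set ys = set xs \<Longrightarrow> sg ys = sg xs"
proof (induction xs arbitrary: ys)
  case Nil then show ?case by simp
next
  case (Cons A xs)
  have "A \<in> set ys" using Cons.prems by simp
  then obtain ys1 ys2 where ys: "ys = ys1 @ A # ys2" by (meson split_list)
  have gys: "good ys" using Cons.prems unfolding good_alt by simp
  have dx: "distinct (A # xs)" using Cons.prems(1) unfolding good_alt by simp
  have s: "set (ys1 @ ys2) = set xs"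
  proof -
    have "A \<notin> set (ys1 @ ys2)" using Cons.prems(2) ys by auto
    moreover have "insert A (set (ys1 @ ys2)) = insert A (set xs)" using Cons.prems(3) ys by auto
    ultimately show ?thesis using dx by (metis insert_ident distinct.simps(2))
  qed
  have d: "distinct (ys1 @ ys2)" using Cons.prems(2) ys by auto
  have "sg ys = sg (A # ys1 @ ys2)" using move_front gys ys by simp
  also have "\<dots> = shsign A (\<Union>(set xs)) * sg (ys1 @ ys2)" using s by simp
  also have "sg (ys1 @ ys2) = sg xs" using Cons.IH[OF _ d s] Cons.prems(1) by simp
  finally show ?case by simp
qed

lemma finite_LL: "finite S \<Longrightarrow> finite (LL i S)"
proof -
  assume "finite S"
  then have "finite {xs. set xs \<subseteq> Pow S \<and> length xs = i}"
    by (intro finite_lists_length_eq) simp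
  moreover have "LL i S \<subseteq> {xs. set xs \<subseteq> Pow S \<and> length xs = i}"
    unfolding LL_def by auto
  ultimately show ?thesis by (rule finite_subset[rotated])
qed

lemma LL_Suc:
  "LL (Suc i) S = (\<lambda>(A, xs). A # xs) ` (SIGMA A:{A\<in>Pow S. card A = 2}. LL i (S - A))"
proof (rule set_eqI)
  fix ys
  show "ys \<in> LL (Suc i) S \<longleftrightarrow> ys \<in> (\<lambda>(A, xs). A # xs) ` (SIGMA A:{A\<in>Pow S. card A = 2}. LL i (S - A))"
  proof
    assume "ys \<in> LL (Suc i) S"
    then obtain A xs where ys: "ys = A # xs" and h: "length xs = i" "card A = 2"
      "A \<inter> \<Union>(set xs) = {}" "good xs" "A \<union> \<Union>(set xs) = S"
      unfolding LL_def by (cases ys) auto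
    then have "xs \<in> LL i (S - A)" unfolding LL_def by auto
    moreover have "A \<in> {A\<in>Pow S. card A = 2}" using h by auto
    ultimately show "ys \<in> (\<lambda>(A, xs). A # xs) ` (SIGMA A:{A\<in>Pow S. card A = 2}. LL i (S - A))"
      using ys by force
  next
    assume "ys \<in> (\<lambda>(A, xs). A # xs) ` (SIGMA A:{A\<in>Pow S. card A = 2}. LL i (S - A))"
    then obtain A xs where ys: "ys = A # xs" and A: "A \<subseteq> S" "card A = 2" and xs: "xs \<in> LL i (S - A)"
      by auto
    then show "ys \<in> LL (Suc i) S" unfolding LL_def by auto
  qed
qed

lemma wpow_expand:
  assumes b2: "\<And>A. b A \<noteq> 0 \<Longrightarrow> card A = 2"
  shows "finite S \<Longrightarrow> wpow b i S = (\<Sum>xs\<in>LL i S. sg xs * prod_list (map b xs))"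
proof (induction i arbitrary: S)
  case 0
  show ?case
  proof (cases "S = {}")
    case True
    then have "LL 0 S = {[]}" unfolding LL_def by auto
    then show ?thesis using True by (simp add: one_form_def)
  next
    case False
    then have "LL 0 S = {}" unfolding LL_def by auto
    then show ?thesis using False by (simp add: one_form_def)
  qed
next
  case (Suc i)
  let ?T = "{A\<in>Pow S. card A = 2}"
  let ?f = "\<lambda>xs. sg xs * prod_list (map b xs)"
  have fT: "finite ?T" using Suc.prems by simp
  have "wpow b (Suc i) S = (\<Sum>A\<in>Pow S. shsign A (S - A) * b A * wpow b i (S - A))"
    by (simp add: wedge_def)
  also have "\<dots> = (\<Sum>A\<in>?T. shsign A (S - A) * b A * wpow b i (S - A))"
    by (rule sum.mono_neutral_right) (use Suc.prems b2 in auto)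
  also have "\<dots> = (\<Sum>A\<in>?T. \<Sum>xs\<in>LL i (S - A). ?f (A # xs))"
  proof (rule sum.cong[OF refl])
    fix A assume A: "A \<in> ?T"
    have "shsign A (S - A) * b A * wpow b i (S - A) =
          (\<Sum>xs\<in>LL i (S - A). shsign A (S - A) * b A * ?f xs)"
      using Suc.IH[of "S - A"] Suc.prems by (simp add: sum_distrib_left)
    also have "\<dots> = (\<Sum>xs\<in>LL i (S - A). ?f (A # xs))"
    proof (rule sum.cong[OF refl])
      fix xs assume "xs \<in> LL i (S - A)"
      then have "\<Union>(set xs) = S - A" unfolding LL_def by simp
      then show "shsign A (S - A) * b A * ?f xs = ?f (A # xs)" by simp
    qed
    finally show "shsign A (S - A) * b A * wpow b i (S - A) = (\<Sum>xs\<in>LL i (S - A). ?f (A # xs))" .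
  qed
  also have "\<dots> = (\<Sum>p\<in>(SIGMA A:?T. LL i (S - A)). ?f (fst p # snd p))"
    by (subst sum.Sigma) (use fT Suc.prems finite_LL in \<open>auto simp: case_prod_beta\<close>)
  also have "\<dots> = (\<Sum>ys\<in>(\<lambda>(A, xs). A # xs) ` (SIGMA A:?T. LL i (S - A)). ?f ys)"
    by (subst sum.reindex) (auto simp: inj_on_def case_prod_beta)
  also have "\<dots> = (\<Sum>ys\<in>LL (Suc i) S. ?f ys)" by (simp only: LL_Suc)
  finally show ?case .
qed

lemma wpow_div_fact:
  assumes b2: "\<And>A. b A \<noteq> 0 \<Longrightarrow> card A = 2" and bZ: "\<And>A. b A \<in> \<int>"
  shows "wpow b i S / fact i \<in> \<int>"
proof (cases "finite S")
  case False
  show ?thesis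
  proof (cases i)
    case 0
    have "S \<noteq> {}" using False by auto
    then show ?thesis using 0 by (simp add: one_form_def)
  next
    case (Suc j)
    have "\<not> finite (Pow S)" using False by simp
    then show ?thesis using Suc by (simp add: wedge_def)
  qed
next
  case fin: True
  let ?f = "\<lambda>xs. sg xs * prod_list (map b xs)"
  have "wpow b i S = (\<Sum>xs\<in>LL i S. ?f xs)" by (rule wpow_expand[OF b2 fin])
  also have "\<dots> = (\<Sum>P\<in>set ` LL i S. \<Sum>xs\<in>{xs. xs \<in> LL i S \<and> set xs = P}. ?f xs)"
    by (rule sum.image_gen) (rule finite_LL[OF fin])
  finally have eq: "wpow b i S / fact i = (\<Sum>P\<in>set ` LL i S. (\<Sum>xs\<in>{xs. xs \<in> LL i S \<and> set xs = P}. ?f xs) / fact i)"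
    by (simp add: sum_divide_distrib)
  show ?thesis unfolding eq
  proof (rule Ints_sum)
    fix P assume "P \<in> set ` LL i S"
    then obtain x0 where x0: "x0 \<in> LL i S" "P = set x0" by auto
    have gx0: "good x0" and lx0: "length x0 = i" and ux0: "\<Union>(set x0) = S" using x0 unfolding LL_def by auto
    have dx0: "distinct x0" using gx0 unfolding good_alt by simp
    have cP: "card P = i" using x0(2) dx0 lx0 by (simp add: distinct_card)
    have E: "{xs. xs \<in> LL i S \<and> set xs = P} = permutations_of_set P"
    proof (rule set_eqI)
      fix xs
      show "xs \<in> {xs. xs \<in> LL i S \<and> set xs = P} \<longleftrightarrow> xs \<in> permutations_of_set P"
      proof
        assume "xs \<in> {xs. xs \<in> LL i S \<and> set xs = P}"
        then show "xs \<in> permutations_of_set P" unfolding LL_def permutations_of_set_def good_alt by auto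
      next
        assume "xs \<in> permutations_of_set P"
        then have h: "set xs = P" "distinct xs" unfolding permutations_of_set_def by auto
        have "good xs" using gx0 h x0(2) unfolding good_alt by simp
        moreover have "length xs = i" using h cP distinct_card by metis
        moreover have "\<Union>(set xs) = S" using h x0(2) ux0 by simp
        ultimately show "xs \<in> {xs. xs \<in> LL i S \<and> set xs = P}" using h unfolding LL_def by auto
      qed
    qed
    have F: "?f xs = sg x0 * prod b P" if "xs \<in> permutations_of_set P" for xs
    proof -
      have h: "set xs = P" "distinct xs" using that unfolding permutations_of_set_def by auto
      have "sg xs = sg x0" using sg_perm[OF gx0 h(2)] h(1) x0(2) by simp
      moreover have "prod_list (map b xs) = prod b P" using h prod.distinct_set_conv_list[of xs b] by simp
      ultimately show ?thesis by simp
    qed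
    have "(\<Sum>xs\<in>{xs. xs \<in> LL i S \<and> set xs = P}. ?f xs) = (\<Sum>xs\<in>permutations_of_set P. sg x0 * prod b P)"
      unfolding E by (rule sum.cong[OF refl F])
    also have "\<dots> = fact i * (sg x0 * prod b P)"
    proof -
      have "finite P" using x0(2) by simp
      then show ?thesis using cP by simp
    qed
    finally have "(\<Sum>xs\<in>{xs. xs \<in> LL i S \<and> set xs = P}. ?f xs) / fact i = sg x0 * prod b P" by simp
    moreover have "sg x0 * prod b P \<in> \<int>" using sg_Ints bZ by (intro Ints_mult Ints_prod) auto
    ultimately show "(\<Sum>xs\<in>{xs. xs \<in> LL i S \<and> set xs = P}. ?f xs) / fact i \<in> \<int>" by simp
  qed
qed

lemma wpow_scale: "wpow (\<lambda>S. c * b S) i S = c ^ i * wpow b i S"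
proof (induction i arbitrary: S)
  case 0 then show ?case by simp
next
  case (Suc i)
  show ?case by (simp add: wedge_def Suc.IH sum_distrib_left algebra_simps)
qed

lemma binom_fact_dvd:
  assumes "prime p" "r > 0" "g \<ge> 2" "1 \<le> i" "i \<le> g"
  shows "p ^ (r * i) dvd ((p ^ nat (expN p r g)) choose i) * fact i"
proof -
  define N where "N = nat (expN p r g)"
  define d where "d = p ^ N"
  have p2: "p \<ge> 2" using assms(1) prime_ge_2_nat by blast
  have d0: "d > 0" using p2 unfolding d_def by simp
  obtain n where n: "d = Suc n" using d0 by (cases d) auto
  obtain j where j: "i = Suc j" using assms(4) by (cases i) auto
  have "(d choose i) * fact i = (d choose i) * i * fact j" using j by (simp add: algebra_simps)
  also have "\<dots> = d * (n choose j) * fact j" using Suc_times_binomial_eq[of n j] n j by simp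
  finally have e: "(d choose i) * fact i = d * (n choose j) * fact j" .
  have ki: "int (r * i) \<le> expN p r g + int (pe p (i - 1))" "expN p r g \<ge> 1"
    using key_ineq[OF assms] by auto
  have iN: "int N = expN p r g" using ki(2) unfolding N_def by simp
  have "int (r * i) \<le> int (N + pe p j)" using ki(1) iN j by simp
  then have le: "r * i \<le> N + pe p j" by (simp only: of_nat_le_iff)
  have "p ^ (r * i) dvd p ^ (N + pe p j)" using le by (simp add: le_imp_power_dvd)
  also have "\<dots> = d * p ^ pe p j" unfolding d_def by (simp add: power_add)
  also have "\<dots> dvd d * fact j" using pe_dvd[OF p2] by simp
  also have "\<dots> dvd d * (n choose j) * fact j" by simp
  finally have "p ^ (r * i) dvd d * (n choose j) * fact j" .
  then have "p ^ (r * i) dvd (d choose i) * fact i" using e by simp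
  then show ?thesis unfolding d_def N_def .
qed

lemma zero_hodge: "hodge_class n J k (\<lambda>_. 0)"
  unfolding hodge_class_def is_form_def rational_form_def form_eval_def by simp

theorem proposition4p1:
  fixes g p r :: nat and J :: "nat \<Rightarrow> nat \<Rightarrow> real" and b :: form
  assumes "g \<ge> 2"
    and "complex_structure (2 * g) J" and "polarizable (2 * g) J"
    and "prime p" and "r > 0"
    and "is_form (2 * g) 2 b" and "integral_form b"
    and "\<not> (\<exists>h z. hodge_class (2 * g) J 2 h \<and> is_form (2 * g) 2 z \<and> integral_form z \<and>
              (\<forall>S. b S / real p = h S + z S))"
  shows "(\<exists>c. (\<forall>j\<in>{1..min (p ^ nat (expN p r g)) g}. hodge_class (2 * g) J (2 * j) (c j)) \<and>
              (\<forall>i\<in>{1..min (p ^ nat (expN p r g)) g}.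
                 integral_form (pBd (p ^ nat (expN p r g)) (\<lambda>S. b S / real (p ^ r)) c i)))
       \<and> (\<forall>i\<in>{1..min (p ^ nat (expN p r g)) g}.
              integral_form (pBd (p ^ nat (expN p r g)) (\<lambda>S. b S / real (p ^ r)) (\<lambda>_ _. 0) i))
       \<and> (p ^ r = 2 \<longrightarrow> expN p r g = \<lfloor>log (real p) (real g - 1)\<rfloor> + 2)"
proof -
  define d where "d = p ^ nat (expN p r g)"
  define B where "B = (\<lambda>S. b S / real (p ^ r))"
  have b2: "\<And>A. b A \<noteq> 0 \<Longrightarrow> card A = 2" using assms(6) unfolding is_form_def by blast
  have bZ: "\<And>A. b A \<in> \<int>" using assms(7) unfolding integral_form_def by blast
  have main: "integral_form (pBd d B (\<lambda>_ _. 0) i)" if i: "i \<in> {1..min d g}" for i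
    unfolding integral_form_def
  proof
    fix S
    have i1: "1 \<le> i" "i \<le> g" using i by auto
    obtain k where k: "(d choose i) * fact i = p ^ (r * i) * k"
      using binom_fact_dvd[OF assms(4,5,1) i1] unfolding d_def by (auto elim: dvdE)
    define z where "z = wpow b i S / fact i"
    have z: "z \<in> \<int>" "wpow b i S = fact i * z"
      using wpow_div_fact[OF b2 bZ, where i=i and S=S] unfolding z_def by simp_all
    have Bs: "B = (\<lambda>S. inverse (real (p ^ r)) * b S)" unfolding B_def by (simp add: divide_inverse mult.commute)
    have pp: "real p ^ (r * i) \<noteq> 0" using assms(4) prime_gt_0_nat by simp
    have "pBd d B (\<lambda>_ _. 0) i S = real (d choose i) * wpow B i S"
      unfolding pBd_def by (simp add: wedge_def)
    also have "\<dots> = real (d choose i) * (inverse (real p ^ r)) ^ i * (fact i * z)"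
      unfolding Bs wpow_scale z(2) by simp
    also have "\<dots> = real ((d choose i) * fact i) * z / real p ^ (r * i)"
    proof -
      have "(inverse (real p ^ r)) ^ i = inverse (real p ^ (r * i))"
        by (simp add: power_mult power_inverse)
      then show ?thesis by (simp add: divide_inverse mult_ac)
    qed
    also have "\<dots> = real k * z" unfolding k using pp prime_gt_0_nat[OF assms(4)] by simp
    finally show "pBd d B (\<lambda>_ _. 0) i S \<in> \<int>" using z(1) by simp
  qed
  have third: "p ^ r = 2 \<longrightarrow> expN p r g = \<lfloor>log (real p) (real g - 1)\<rfloor> + 2"
  proof
    assume h: "p ^ r = 2"
    have p2: "p \<ge> 2" using assms(4) prime_ge_2_nat by blast
    have r1: "r = 1"
    proof (rule ccontr)
      assume "r \<noteq> 1"
      then have "r \<ge> 2" using assms(5) by simp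
      then have "p ^ 2 \<le> p ^ r" using p2 by (intro power_increasing) auto
      moreover have "p ^ 2 \<ge> (4::nat)" using p2 power_mono[OF p2, of 2] by simp
      ultimately show False using h by simp
    qed
    then have "p = 2" using h by simp
    then show "expN p r g = \<lfloor>log (real p) (real g - 1)\<rfloor> + 2"
      unfolding expN_def using r1 assms(1) by simp
  qed
  show ?thesis
    unfolding d_def[symmetric] B_def[symmetric]
  proof (intro conjI)
    show "\<exists>c. (\<forall>j\<in>{1..min d g}. hodge_class (2 * g) J (2 * j) (c j)) \<and>
              (\<forall>i\<in>{1..min d g}. integral_form (pBd d B c i))"
      by (rule exI[of _ "\<lambda>_ _. 0"]) (use main zero_hodge in auto)
  qed (use main third in auto)
qed

end
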